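(* (i) Let $(\bar x,\bar r)\in\mathbb{R}^n\times\mathbb{R}^2_+$ be a global optimal solution of problem (P2) and suppose $(\bar x,\bar\xi)\in\mathcal{M}(\bar r)$. Then $(\bar x,\bar\lambda)$ with $\bar\lambda:=\bar\xi$ is a global optimal solution of problem (P1). (ii) Suppose there exists a dense subset $\mathbb{D}\subset\mathbb{R}^n\times\mathbb{R}^2_+$ such that $\mathcal{M}(r)\neq\varnothing$ for all $(x,r)\in\mathbb{D}$. Let $(\bar x,\bar\lambda)$ be a global optimal solution of problem (P1) and let $\bar r:=\mathbb{Q}(\bar x)$. Then $(\bar x,\bar r)$ is a global optimal solution of problem (P2).
   Context: Fix $\Psi\in\mathbb{R}^{d\times n}$, linear difference operators $D_1,\dots,D_n$ (matrices with $n$ columns), and $\|x\|_{\mathrm{TV}}:=\sum_{i=1}^n\|D_ix\|_1$. Training data $\Phi_{\mathrm{tr}}\in\mathbb{R}^{m_1\times n}$, $b_{\mathrm{tr}}\in\mathbb{R}^{m_1}$ and validation data $\Phi_{\mathrm{val}}\in\mathbb{R}^{m_2\times n}$, $b_{\mathrm{val}}\in\mathbb{R}^{m_2}$ are given. Let $F(x):=\frac12\|\Phi_{\mathrm{val}}x-b_{\mathrm{val}}\|_2^2$. For $\lambda\in\mathbb{R}^2_+$, $\mathbb{S}_p(\lambda)$ is the set of minimizers over $x\in\mathbb{R}^n$ of $\frac12\|\Phi_{\mathrm{tr}}x-b_{\mathrm{tr}}\|_2^2+\lambda_1\|\Psi x\|_1+\lambda_2\|x\|_{\mathrm{TV}}$;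 for $r\in\mathbb{R}^2_+$, $\mathbb{S}_c(r)$ is the set of minimizers over $x\in\mathbb{R}^n$ of $\frac12\|\Phi_{\mathrm{tr}}x-b_{\mathrm{tr}}\|_2^2$ subject to $\|\Psi x\|_1\le r_1$, $\|x\|_{\mathrm{TV}}\le r_2$. Problem (P1): minimize $F(x)$ over $(x,\lambda)\in\mathbb{R}^n\times\mathbb{R}^2_+$ subject to $x\in\mathbb{S}_p(\lambda)$. Problem (P2): minimize $F(x)$ over $(x,r)\in\mathbb{R}^n\times\mathbb{R}^2_+$ subject to $x\in\mathbb{S}_c(r)$. A global optimal solution is a feasible point whose objective value is $\le$ that of every feasible point. $\mathbb{Q}(x):=(\|\Psi x\|_1,\|x\|_{\mathrm{TV}})\in\mathbb{R}^2_+$. For $r\in\mathbb{R}^2_+$, $\mathcal{M}(r):=\{(x,\xi)\in\mathbb{R}^n\times\mathbb{R}^2_+ : 0\in\Phi_{\mathrm{tr}}^\top(\Phi_{\mathrm{tr}}x-b_{\mathrm{tr}})+\xi_1\Psi^\top\partial\|\cdot\|_1(\Psi x)+\xi_2\sum_{i=1}^n D_i^\top\partial\|\cdot\|_1(D_ix),\ \xi_1(\|\Psi x\|_1-r_1)=0,\ \xi_2(\|x\|_{\mathrm{TV}}-r_2)=0\}$, where $\partial$ is the convex subdifferential. *)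

theory Defs
  imports "HOL-Analysis.Analysis"
begin

definition l1norm :: "real^'k \<Rightarrow> real" where
  "l1norm v = (\<Sum>j\<in>UNIV. \<bar>v $ j\<bar>)"

definition subdiff :: "(real^'k \<Rightarrow> real) \<Rightarrow> real^'k \<Rightarrow> (real^'k) set" where
  "subdiff f y = {g. \<forall>z. f z \<ge> f y + g \<bullet> (z - y)}"

definition TVnorm :: "('n \<Rightarrow> real^'n^'k) \<Rightarrow> real^'n \<Rightarrow> real" where
  "TVnorm D x = (\<Sum>i\<in>UNIV. l1norm (D i *v x))"

definition R2plus :: "(real \<times> real) set" where
  "R2plus = {p. fst p \<ge> 0 \<and> snd p \<ge> 0}"

definition lossTr :: "real^'n^'m \<Rightarrow> real^'m \<Rightarrow> real^'n \<Rightarrow> real" where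
  "lossTr Phi b x = (1/2) * (norm (Phi *v x - b))\<^sup>2"

definition Fval :: "real^'n^'m \<Rightarrow> real^'m \<Rightarrow> real^'n \<Rightarrow> real" where
  "Fval Phi b x = (1/2) * (norm (Phi *v x - b))\<^sup>2"

definition Sp :: "real^'n^'d \<Rightarrow> ('n \<Rightarrow> real^'n^'k) \<Rightarrow> real^'n^'m \<Rightarrow> real^'m
                  \<Rightarrow> real \<times> real \<Rightarrow> (real^'n) set" where
  "Sp Psi D Phi b lam =
     {x. \<forall>y. lossTr Phi b x + fst lam * l1norm (Psi *v x) + snd lam * TVnorm D x
            \<le> lossTr Phi b y + fst lam * l1norm (Psi *v y) + snd lam * TVnorm D y}"

definition Sc :: "real^'n^'d \<Rightarrow> ('n \<Rightarrow> real^'n^'k) \<Rightarrow> real^'n^'m \<Rightarrow> real^'m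
                  \<Rightarrow> real \<times> real \<Rightarrow> (real^'n) set" where
  "Sc Psi D Phi b r =
     {x. l1norm (Psi *v x) \<le> fst r \<and> TVnorm D x \<le> snd r \<and>
         (\<forall>y. l1norm (Psi *v y) \<le> fst r \<and> TVnorm D y \<le> snd r
              \<longrightarrow> lossTr Phi b x \<le> lossTr Phi b y)}"

definition globalOptP1 ::
  "real^'n^'d \<Rightarrow> ('n \<Rightarrow> real^'n^'k) \<Rightarrow> real^'n^'m1 \<Rightarrow> real^'m1 \<Rightarrow> real^'n^'m2 \<Rightarrow> real^'m2
   \<Rightarrow> real^'n \<Rightarrow> real \<times> real \<Rightarrow> bool" where
  "globalOptP1 Psi D Phitr btr Phival bval x lam \<longleftrightarrow>
     lam \<in> R2plus \<and> x \<in> Sp Psi D Phitr btr lam \<and>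
     (\<forall>x' lam'. lam' \<in> R2plus \<and> x' \<in> Sp Psi D Phitr btr lam'
        \<longrightarrow> Fval Phival bval x \<le> Fval Phival bval x')"

definition globalOptP2 ::
  "real^'n^'d \<Rightarrow> ('n \<Rightarrow> real^'n^'k) \<Rightarrow> real^'n^'m1 \<Rightarrow> real^'m1 \<Rightarrow> real^'n^'m2 \<Rightarrow> real^'m2
   \<Rightarrow> real^'n \<Rightarrow> real \<times> real \<Rightarrow> bool" where
  "globalOptP2 Psi D Phitr btr Phival bval x r \<longleftrightarrow>
     r \<in> R2plus \<and> x \<in> Sc Psi D Phitr btr r \<and>
     (\<forall>x' r'. r' \<in> R2plus \<and> x' \<in> Sc Psi D Phitr btr r'
        \<longrightarrow> Fval Phival bval x \<le> Fval Phival bval x')"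

definition Qmap :: "real^'n^'d \<Rightarrow> ('n \<Rightarrow> real^'n^'k) \<Rightarrow> real^'n \<Rightarrow> real \<times> real" where
  "Qmap Psi D x = (l1norm (Psi *v x), TVnorm D x)"

text \<open>The KKT-type set M(r); set sums of subdifferentials are expressed via selections.\<close>
definition Mset :: "real^'n^'d \<Rightarrow> ('n \<Rightarrow> real^'n^'k) \<Rightarrow> real^'n^'m \<Rightarrow> real^'m
                  \<Rightarrow> real \<times> real \<Rightarrow> ((real^'n) \<times> (real \<times> real)) set" where
  "Mset Psi D Phi b r =
     {(x, xi). xi \<in> R2plus \<and>
        (\<exists>g1 g2. g1 \<in> subdiff l1norm (Psi *v x) \<and>
                 (\<forall>i. g2 i \<in> subdiff l1norm (D i *v x)) \<and>
                 0 = transpose Phi *v (Phi *v x - b) + fst xi *\<^sub>R (transpose Psi *v g1)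
                     + snd xi *\<^sub>R (\<Sum>i\<in>UNIV. transpose (D i) *v g2 i)) \<and>
        fst xi * (l1norm (Psi *v x) - fst r) = 0 \<and>
        snd xi * (TVnorm D x - snd r) = 0}"

end

theory Submission
  imports Defs "HOL-Analysis.Analysis"
begin

lemma lp_kkt:
  fixes a :: "'i \<Rightarrow> 'a::euclidean_space" and c x :: 'a
  assumes fin: "finite I" and feas: "\<forall>i\<in>I. a i \<bullet> x \<le> \<beta> i"
  and opt: "\<forall>y. (\<forall>i\<in>I. a i \<bullet> y \<le> \<beta> i) \<longrightarrow> c \<bullet> x \<le> c \<bullet> y"
  shows "\<exists>\<mu>. (\<forall>i\<in>I. \<mu> i \<ge> 0 \<and> (\<mu> i \<noteq> 0 \<longrightarrow> a i \<bullet> x = \<beta> i)) \<and> -c = (\<Sum>i\<in>I. \<mu> i *\<^sub>R a i)"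
proof -
  define Act where "Act = {i\<in>I. a i \<bullet> x = \<beta> i}"
  have finA: "finite Act" using fin by (simp add: Act_def)
  define G where "G = insert 0 (a ` Act)"
  define K where "K = conic hull (convex hull G)"
  define K' where "K' = {v. \<exists>\<mu>. (\<forall>i\<in>Act. \<mu> i \<ge> 0) \<and> v = (\<Sum>i\<in>Act. \<mu> i *\<^sub>R a i)}"
  have finG: "finite G" using finA by (simp add: G_def)
  have clK: "closed K" unfolding K_def
    by (rule closed_conic_hull_strong) (simp add: polytope_convex_hull finG)
  have cvK: "convex K" unfolding K_def by (simp add: convex_conic_hull)
  have GK: "G \<subseteq> K" unfolding K_def
    by (meson hull_subset subset_trans)
  have K'conv: "convex K'"
    unfolding convex_def K'_def
  proof (clarify)
    fix u v :: real and \<mu>1 \<mu>2 :: "'i \<Rightarrow> real"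
    assume h: "0 \<le> u" "0 \<le> v" "u + v = 1" "\<forall>i\<in>Act. 0 \<le> \<mu>1 i" "\<forall>i\<in>Act. 0 \<le> \<mu>2 i"
    show "\<exists>\<mu>. (\<forall>i\<in>Act. 0 \<le> \<mu> i) \<and> u *\<^sub>R (\<Sum>i\<in>Act. \<mu>1 i *\<^sub>R a i) + v *\<^sub>R (\<Sum>i\<in>Act. \<mu>2 i *\<^sub>R a i) = (\<Sum>i\<in>Act. \<mu> i *\<^sub>R a i)"
      apply (rule exI[of _ "\<lambda>i. u * \<mu>1 i + v * \<mu>2 i"])
      using h by (auto simp: scaleR_sum_right sum.distrib[symmetric] scaleR_add_left)
  qed
  have K'conic: "conic K'"
    unfolding conic_def K'_def
  proof (clarify)
    fix s :: real and \<mu> :: "'i \<Rightarrow> real"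
    assume h: "0 \<le> s" "\<forall>i\<in>Act. 0 \<le> \<mu> i"
    show "\<exists>\<nu>. (\<forall>i\<in>Act. 0 \<le> \<nu> i) \<and> s *\<^sub>R (\<Sum>i\<in>Act. \<mu> i *\<^sub>R a i) = (\<Sum>i\<in>Act. \<nu> i *\<^sub>R a i)"
      apply (rule exI[of _ "\<lambda>i. s * \<mu> i"])
      using h by (auto simp: scaleR_sum_right)
  qed
  have GK': "G \<subseteq> K'"
  proof
    fix g assume "g \<in> G"
    then consider "g = 0" | j where "j \<in> Act" "g = a j" unfolding G_def by blast
    then show "g \<in> K'"
    proof cases
      case 1 then show ?thesis unfolding K'_def by (auto intro!: exI[of _ "\<lambda>i. 0"])
    next
      case 2
      have "(\<Sum>i\<in>Act. (if i = j then 1 else 0) *\<^sub>R a i) = a j"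
      proof -
        have h: "(\<lambda>i. (if i = j then 1 else 0) *\<^sub>R a i) = (\<lambda>i. if i = j then a i else 0)" by auto
        show ?thesis unfolding h using 2 finA by (simp add: sum.delta')
      qed
      then show ?thesis unfolding K'_def using 2
        by (auto intro!: exI[of _ "\<lambda>i. if i = j then 1 else 0"])
    qed
  qed
  have KK': "K \<subseteq> K'"
  proof -
    have "convex hull G \<subseteq> K'" using hull_minimal[of G K' convex] GK' K'conv by blast
    then show ?thesis unfolding K_def using hull_minimal[of "convex hull G" K' conic] K'conic by blast
  qed
  have "-c \<in> K"
  proof (rule ccontr)
    assume "-c \<notin> K"
    then obtain w b where wb: "w \<bullet> (-c) < b" "\<forall>k\<in>K. b < w \<bullet> k"
      using separating_hyperplane_closed_point[OF cvK clK] by blast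
    have "0 \<in> K" using GK G_def by auto
    then have b0: "b < 0" using wb by auto
    have wa: "w \<bullet> a i \<ge> 0" if "i \<in> Act" for i
    proof (rule ccontr)
      assume n: "\<not> w \<bullet> a i \<ge> 0"
      have "a i \<in> K" using GK G_def that by auto
      moreover have "conic K" unfolding K_def by (rule conic_conic_hull)
      ultimately have "(b / (w \<bullet> a i)) *\<^sub>R a i \<in> K"
        using n b0 divide_neg_neg[of b "w \<bullet> a i"] by (intro conicD) auto
      then have "b < w \<bullet> ((b / (w \<bullet> a i)) *\<^sub>R a i)" using wb by blast
      moreover have "w \<bullet> ((b / (w \<bullet> a i)) *\<^sub>R a i) = b" using n by simp
      ultimately show False by simp
    qed
    have wc: "w \<bullet> c > 0" using wb b0 by simp
    define d where "d = - w"
    define T where "T = insert 1 ((\<lambda>i. (\<beta> i - a i \<bullet> x) / (\<bar>a i \<bullet> d\<bar> + 1)) ` (I - Act))"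
    define t where "t = Min T"
    have finT: "finite T" using fin by (simp add: T_def)
    have Tpos: "\<forall>s\<in>T. s > 0"
    proof
      fix s assume "s \<in> T"
      then consider "s = 1" | i where "i \<in> I - Act" "s = (\<beta> i - a i \<bullet> x) / (\<bar>a i \<bullet> d\<bar> + 1)"
        unfolding T_def by blast
      then show "s > 0"
      proof cases
        case 2
        then have "a i \<bullet> x < \<beta> i" using feas Act_def by force
        then show ?thesis using 2 by (simp add: add_pos_nonneg)
      qed simp
    qed
    have tpos: "t > 0" unfolding t_def using finT Tpos T_def by simp
    have tle: "t \<le> s" if "s \<in> T" for s unfolding t_def using finT that by simp
    define y where "y = x + t *\<^sub>R d"
    have "\<forall>i\<in>I. a i \<bullet> y \<le> \<beta> i"
    proof
      fix i assume i: "i \<in> I"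
      show "a i \<bullet> y \<le> \<beta> i"
      proof (cases "i \<in> Act")
        case True
        then have "a i \<bullet> d \<le> 0" using wa[OF True] by (simp add: d_def inner_commute)
        then have "t * (a i \<bullet> d) \<le> 0" using tpos by (simp add: mult_nonneg_nonpos)
        then show ?thesis using True by (simp add: y_def Act_def inner_add_right)
      next
        case False
        then have "t \<le> (\<beta> i - a i \<bullet> x) / (\<bar>a i \<bullet> d\<bar> + 1)" using i by (intro tle) (auto simp: T_def)
        then have "t * (\<bar>a i \<bullet> d\<bar> + 1) \<le> \<beta> i - a i \<bullet> x"
          by (simp add: pos_le_divide_eq add_pos_nonneg)
        moreover have "t * (a i \<bullet> d) \<le> t * (\<bar>a i \<bullet> d\<bar> + 1)"
          using tpos by (intro mult_left_mono) auto
        ultimately show ?thesis by (simp add: y_def inner_add_right)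
      qed
    qed
    then have "c \<bullet> x \<le> c \<bullet> y" using opt by blast
    moreover have "c \<bullet> y = c \<bullet> x - t * (w \<bullet> c)"
      by (simp add: y_def d_def inner_diff_right inner_commute)
    ultimately show False using tpos wc using mult_pos_pos[of t "w \<bullet> c"] by linarith
  qed
  then have "-c \<in> K'" using KK' by blast
  then obtain \<mu> where mu: "\<forall>i\<in>Act. \<mu> i \<ge> 0" "-c = (\<Sum>i\<in>Act. \<mu> i *\<^sub>R a i)"
    unfolding K'_def by blast
  define \<nu> where "\<nu> i = (if i \<in> Act then \<mu> i else 0)" for i
  have "(\<Sum>i\<in>I. \<nu> i *\<^sub>R a i) = (\<Sum>i\<in>Act. \<nu> i *\<^sub>R a i)"
    by (rule sum.mono_neutral_right[OF fin]) (auto simp: Act_def \<nu>_def)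
  also have "\<dots> = (\<Sum>i\<in>Act. \<mu> i *\<^sub>R a i)" by (simp add: \<nu>_def)
  finally show ?thesis using mu
    by (intro exI[of _ \<nu>]) (auto simp: \<nu>_def Act_def)
qed


declare dot_lmul_matrix[simp]

definition sv :: "('k \<Rightarrow> bool) \<Rightarrow> real^'k" where
  "sv f = (\<chi> j. if f j then 1 else -1)"

lemma transp_dot: "(transpose M *v s) \<bullet> y = s \<bullet> ((M :: real^'a^'b) *v y)"
proof -
  have "transpose M *v s = s v* M"
    by (metis transpose_transpose vector_transpose_matrix)
  then show ?thesis by (simp add: dot_lmul_matrix)
qed

lemma sv_le: "sv f \<bullet> v \<le> l1norm v"
  unfolding l1norm_def inner_vec_def sv_def
  by (rule sum_mono) auto

lemma sv_eq: "sv (\<lambda>j. v $ j \<ge> 0) \<bullet> v = l1norm v"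
  unfolding l1norm_def inner_vec_def sv_def
  by (rule sum.cong) auto

lemma l1_nonneg: "l1norm v \<ge> 0"
  unfolding l1norm_def by (simp add: sum_nonneg)

lemma TV_nonneg: "TVnorm D x \<ge> 0"
  unfolding TVnorm_def by (simp add: sum_nonneg l1_nonneg)

definition a2 :: "('n \<Rightarrow> real^'n^'k) \<Rightarrow> ('n \<Rightarrow> 'k \<Rightarrow> bool) \<Rightarrow> real^'n" where
  "a2 D t = (\<Sum>i\<in>UNIV. transpose (D i) *v sv (t i))"

lemma a2_dot: "a2 D t \<bullet> y = (\<Sum>i\<in>UNIV. sv (t i) \<bullet> (D i *v y))"
  unfolding a2_def by (simp add: inner_sum_left transp_dot)

lemma a2_le: "a2 D t \<bullet> y \<le> TVnorm D y"
  unfolding a2_dot TVnorm_def by (rule sum_mono) (rule sv_le)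

lemma a2_eq: "a2 D (\<lambda>i j. (D i *v y) $ j \<ge> 0) \<bullet> y = TVnorm D y"
  unfolding a2_dot TVnorm_def by (rule sum.cong) (auto simp: sv_eq)

lemma a1_le: "(transpose Psi *v sv f) \<bullet> y \<le> l1norm (Psi *v y)"
  by (simp add: transp_dot sv_le)

lemma a1_eq: "(transpose Psi *v sv (\<lambda>j. (Psi *v y) $ j \<ge> 0)) \<bullet> y = l1norm (Psi *v y)"
  by (simp add: transp_dot sv_eq)

lemma loss_expand:
  "lossTr Phi b (x + t *\<^sub>R v) = lossTr Phi b x + t * ((transpose Phi *v (Phi *v x - b)) \<bullet> v)
     + t\<^sup>2 / 2 * (norm (Phi *v v))\<^sup>2"
proof -
  have e: "Phi *v (x + t *\<^sub>R v) - b = (Phi *v x - b) + t *\<^sub>R (Phi *v v)"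
    by (simp add: matrix_vector_right_distrib matrix_vector_mult_scaleR)
  show ?thesis
    unfolding lossTr_def e power2_norm_eq_inner transp_dot
    by (simp add: inner_add_left inner_add_right algebra_simps power2_eq_square inner_commute)
qed

lemma loss_grad:
  "lossTr Phi b y \<ge> lossTr Phi b x + (transpose Phi *v (Phi *v x - b)) \<bullet> (y - x)"
proof -
  have "lossTr Phi b y = lossTr Phi b (x + 1 *\<^sub>R (y - x))" by simp
  also have "\<dots> = lossTr Phi b x + (transpose Phi *v (Phi *v x - b)) \<bullet> (y - x)
     + 1 / 2 * (norm (Phi *v (y - x)))\<^sup>2" by (subst loss_expand) simp
  finally show ?thesis by simp
qed


lemma Sc_to_Sp:
  fixes Psi :: "real^'n^'d" and D :: "'n \<Rightarrow> real^'n^'k" and Phi :: "real^'n^'m"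
  assumes xS: "x \<in> Sc Psi D Phi b r"
  shows "\<exists>lam\<in>R2plus. x \<in> Sp Psi D Phi b lam"
proof -
  define a :: "('d \<Rightarrow> bool) + ('n \<Rightarrow> 'k \<Rightarrow> bool) \<Rightarrow> real^'n" where
    "a i = (case i of Inl f \<Rightarrow> transpose Psi *v sv f | Inr t \<Rightarrow> a2 D t)" for i
  define \<beta> :: "('d \<Rightarrow> bool) + ('n \<Rightarrow> 'k \<Rightarrow> bool) \<Rightarrow> real" where
    "\<beta> i = (case i of Inl f \<Rightarrow> fst r | Inr t \<Rightarrow> snd r)" for i
  define c where "c = transpose Phi *v (Phi *v x - b)"
  have feasI: "(\<forall>i\<in>UNIV. a i \<bullet> y \<le> \<beta> i) \<longleftrightarrow> l1norm (Psi *v y) \<le> fst r \<and> TVnorm D y \<le> snd r" for y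
  proof
    assume h: "\<forall>i\<in>UNIV. a i \<bullet> y \<le> \<beta> i"
    have "l1norm (Psi *v y) \<le> fst r"
      using h[rule_format, of "Inl (\<lambda>j. (Psi *v y) $ j \<ge> 0)"] by (simp add: a_def \<beta>_def a1_eq sv_eq)
    moreover have "TVnorm D y \<le> snd r"
      using h[rule_format, of "Inr (\<lambda>i j. (D i *v y) $ j \<ge> 0)"] by (simp add: a_def \<beta>_def a2_eq)
    ultimately show "l1norm (Psi *v y) \<le> fst r \<and> TVnorm D y \<le> snd r" ..
  next
    assume h: "l1norm (Psi *v y) \<le> fst r \<and> TVnorm D y \<le> snd r"
    show "\<forall>i\<in>UNIV. a i \<bullet> y \<le> \<beta> i"
    proof
      fix i show "a i \<bullet> y \<le> \<beta> i"
        using h a1_le[of Psi _ y] a2_le[of D _ y]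
        by (cases i) (auto simp: a_def \<beta>_def intro: order_trans)
    qed
  qed
  have xfeas: "l1norm (Psi *v x) \<le> fst r" "TVnorm D x \<le> snd r"
    and xmin: "\<And>y. l1norm (Psi *v y) \<le> fst r \<Longrightarrow> TVnorm D y \<le> snd r \<Longrightarrow> lossTr Phi b x \<le> lossTr Phi b y"
    using xS unfolding Sc_def by auto
  have feas: "\<forall>i\<in>UNIV. a i \<bullet> x \<le> \<beta> i" using feasI xfeas by blast
  have opt: "\<forall>y. (\<forall>i\<in>UNIV. a i \<bullet> y \<le> \<beta> i) \<longrightarrow> c \<bullet> x \<le> c \<bullet> y"
  proof (intro allI impI)
    fix y assume yf: "\<forall>i\<in>UNIV. a i \<bullet> y \<le> \<beta> i"
    define q where "q = (norm (Phi *v (y - x)))\<^sup>2"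
    have q0: "q \<ge> 0" by (simp add: q_def)
    have key: "0 \<le> t * (c \<bullet> (y - x)) + t\<^sup>2 / 2 * q" if t: "0 \<le> t" "t \<le> 1" for t
    proof -
      have "\<forall>i\<in>UNIV. a i \<bullet> (x + t *\<^sub>R (y - x)) \<le> \<beta> i"
      proof
        fix i
        have "a i \<bullet> (x + t *\<^sub>R (y - x)) = (1 - t) * (a i \<bullet> x) + t * (a i \<bullet> y)"
          by (simp add: inner_add_right inner_diff_right algebra_simps)
        also have "\<dots> \<le> (1 - t) * \<beta> i + t * \<beta> i"
          using feas yf t by (intro add_mono mult_left_mono) auto
        finally show "a i \<bullet> (x + t *\<^sub>R (y - x)) \<le> \<beta> i" by (simp add: algebra_simps)
      qed
      then have "lossTr Phi b x \<le> lossTr Phi b (x + t *\<^sub>R (y - x))"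
        using feasI xmin by blast
      then show ?thesis unfolding loss_expand c_def q_def by simp
    qed
    have "c \<bullet> (y - x) \<ge> 0"
    proof (rule ccontr)
      assume n: "\<not> c \<bullet> (y - x) \<ge> 0"
      define e where "e = - (c \<bullet> (y - x))"
      have e0: "e > 0" using n by (simp add: e_def)
      define t where "t = min 1 (e / (q + 1))"
      have t0: "t > 0" using e0 q0 by (simp add: t_def)
      have t1: "t \<le> 1" by (simp add: t_def)
      have tq: "t * q \<le> e"
      proof -
        have "t * q \<le> e / (q + 1) * q" using q0 by (intro mult_right_mono) (auto simp: t_def)
        also have "\<dots> \<le> e" using q0 e0 by (simp add: divide_le_eq field_simps)
        finally show ?thesis .
      qed
      have "0 \<le> t * (c \<bullet> (y - x)) + t\<^sup>2 / 2 * q" using key t0 t1 by simp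
      also have "\<dots> = t * (- e + t * q / 2)" by (simp add: e_def power2_eq_square algebra_simps)
      finally have "0 \<le> - e + t * q / 2" using t0 by (simp add: zero_le_mult_iff)
      then show False using tq e0 by linarith
    qed
    then show "c \<bullet> x \<le> c \<bullet> y" by (simp add: inner_diff_right)
  qed
  obtain \<mu> where mu: "\<forall>i\<in>UNIV. \<mu> i \<ge> 0 \<and> (\<mu> i \<noteq> 0 \<longrightarrow> a i \<bullet> x = \<beta> i)"
    and mc: "-c = (\<Sum>i\<in>UNIV. \<mu> i *\<^sub>R a i)"
    using lp_kkt[OF finite feas opt] by blast
  define l1 where "l1 = (\<Sum>f\<in>UNIV. \<mu> (Inl f))"
  define l2 where "l2 = (\<Sum>t\<in>UNIV. \<mu> (Inr t))"
  have lam: "(l1, l2) \<in> R2plus" unfolding R2plus_def l1_def l2_def using mu by (simp add: sum_nonneg)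
  have "x \<in> Sp Psi D Phi b (l1, l2)"
    unfolding Sp_def
  proof (clarify)
    fix y
    define F1 where "F1 z = l1norm (Psi *v z)" for z
    define F2 where "F2 z = TVnorm D z" for z
    define h where "h i = (case i of Inl f \<Rightarrow> \<mu> i * (F1 x - F1 y) | Inr t \<Rightarrow> \<mu> i * (F2 x - F2 y))" for i
    have "c \<bullet> (y - x) = (\<Sum>i\<in>UNIV. \<mu> i * (a i \<bullet> x - a i \<bullet> y))"
    proof -
      have "c \<bullet> (y - x) = - ((-c) \<bullet> (y - x))" by simp
      also have "\<dots> = - (\<Sum>i\<in>UNIV. \<mu> i * (a i \<bullet> (y - x)))"
        unfolding mc by (simp add: inner_sum_left)
      also have "\<dots> = (\<Sum>i\<in>UNIV. \<mu> i * (a i \<bullet> x - a i \<bullet> y))"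
        by (simp add: sum_negf[symmetric] inner_diff_right algebra_simps)
      finally show ?thesis .
    qed
    also have "\<dots> \<ge> (\<Sum>i\<in>UNIV. h i)"
    proof (rule sum_mono)
      fix i :: "('d \<Rightarrow> bool) + ('n \<Rightarrow> 'k \<Rightarrow> bool)"
      show "h i \<le> \<mu> i * (a i \<bullet> x - a i \<bullet> y)"
      proof (cases "\<mu> i = 0")
        case True then show ?thesis by (cases i) (simp_all add: h_def)
      next
        case False
        then have act: "a i \<bullet> x = \<beta> i" and mpos: "\<mu> i \<ge> 0" using mu by auto
        show ?thesis
        proof (cases i)
          case (Inl f)
          have "F1 x - F1 y \<le> a i \<bullet> x - a i \<bullet> y"
            using act xfeas(1) a1_le[of Psi f y] Inl by (simp add: a_def \<beta>_def F1_def)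
          then show ?thesis using mpos Inl by (simp add: h_def mult_left_mono)
        next
          case (Inr t)
          have "F2 x - F2 y \<le> a i \<bullet> x - a i \<bullet> y"
            using act xfeas(2) a2_le[of D t y] Inr by (simp add: a_def \<beta>_def F2_def)
          then show ?thesis using mpos Inr by (simp add: h_def mult_left_mono)
        qed
      qed
    qed
    finally have ch: "(\<Sum>i\<in>UNIV. h i) \<le> c \<bullet> (y - x)" .
    have "(\<Sum>i\<in>UNIV. h i) = (\<Sum>i\<in>UNIV <+> UNIV. h i)" by simp
    also have "\<dots> = (\<Sum>f\<in>UNIV. h (Inl f)) + (\<Sum>t\<in>UNIV. h (Inr t))"
      by (subst sum.Plus) auto
    also have "\<dots> = l1 * (F1 x - F1 y) + l2 * (F2 x - F2 y)"
      by (simp add: h_def l1_def l2_def sum_distrib_right)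
    finally have "l1 * (F1 x - F1 y) + l2 * (F2 x - F2 y) \<le> c \<bullet> (y - x)" using ch by simp
    moreover have "lossTr Phi b y \<ge> lossTr Phi b x + c \<bullet> (y - x)"
      unfolding c_def by (rule loss_grad)
    ultimately show "lossTr Phi b x + fst (l1, l2) * l1norm (Psi *v x) + snd (l1, l2) * TVnorm D x
         \<le> lossTr Phi b y + fst (l1, l2) * l1norm (Psi *v y) + snd (l1, l2) * TVnorm D y"
      by (simp add: F1_def F2_def algebra_simps)
  qed
  then show ?thesis using lam by blast
qed

lemma Sp_to_Sc:
  fixes Psi :: "real^'n^'d" and D :: "'n \<Rightarrow> real^'n^'k" and Phi :: "real^'n^'m"
  assumes lam: "lam \<in> R2plus" and xS: "x \<in> Sp Psi D Phi b lam"
  shows "x \<in> Sc Psi D Phi b (Qmap Psi D x)"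
  unfolding Sc_def Qmap_def
proof (clarsimp)
  fix y assume y1: "l1norm (Psi *v y) \<le> l1norm (Psi *v x)" and y2: "TVnorm D y \<le> TVnorm D x"
  have "lossTr Phi b x + fst lam * l1norm (Psi *v x) + snd lam * TVnorm D x
        \<le> lossTr Phi b y + fst lam * l1norm (Psi *v y) + snd lam * TVnorm D y"
    using xS unfolding Sp_def by blast
  moreover have "fst lam * l1norm (Psi *v y) \<le> fst lam * l1norm (Psi *v x)"
    using lam y1 by (intro mult_left_mono) (auto simp: R2plus_def)
  moreover have "snd lam * TVnorm D y \<le> snd lam * TVnorm D x"
    using lam y2 by (intro mult_left_mono) (auto simp: R2plus_def)
  ultimately show "lossTr Phi b x \<le> lossTr Phi b y" by linarith
qed

lemma M_to_Sp:
  fixes Psi :: "real^'n^'d" and D :: "'n \<Rightarrow> real^'n^'k" and Phi :: "real^'n^'m"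
  assumes M: "(x, xi) \<in> Mset Psi D Phi b r"
  shows "xi \<in> R2plus \<and> x \<in> Sp Psi D Phi b xi"
proof -
  obtain g1 g2 where xi: "xi \<in> R2plus" and g1: "g1 \<in> subdiff l1norm (Psi *v x)"
    and g2: "\<forall>i. g2 i \<in> subdiff l1norm (D i *v x)"
    and eq: "0 = transpose Phi *v (Phi *v x - b) + fst xi *\<^sub>R (transpose Psi *v g1)
                     + snd xi *\<^sub>R (\<Sum>i\<in>UNIV. transpose (D i) *v g2 i)"
    using M unfolding Mset_def by blast
  have "x \<in> Sp Psi D Phi b xi"
    unfolding Sp_def
  proof (clarify)
    fix y
    define c where "c = transpose Phi *v (Phi *v x - b)"
    have h1: "l1norm (Psi *v y) - l1norm (Psi *v x) \<ge> (transpose Psi *v g1) \<bullet> (y - x)"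
      using g1 unfolding subdiff_def
      by (auto simp: transp_dot matrix_vector_mult_diff_distrib elim!: allE[of _ "Psi *v y"])
    have h2: "TVnorm D y - TVnorm D x \<ge> (\<Sum>i\<in>UNIV. transpose (D i) *v g2 i) \<bullet> (y - x)"
    proof -
      have "(\<Sum>i\<in>UNIV. transpose (D i) *v g2 i) \<bullet> (y - x) = (\<Sum>i\<in>UNIV. (transpose (D i) *v g2 i) \<bullet> (y - x))"
        by (simp add: inner_sum_left)
      also have "\<dots> \<le> (\<Sum>i\<in>UNIV. l1norm (D i *v y) - l1norm (D i *v x))"
      proof (rule sum_mono)
        fix i
        show "(transpose (D i) *v g2 i) \<bullet> (y - x) \<le> l1norm (D i *v y) - l1norm (D i *v x)"
          using g2 unfolding subdiff_def
          by (auto simp: transp_dot matrix_vector_mult_diff_distrib elim!: allE[of _ i] allE[of _ "D i *v y"])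
      qed
      also have "\<dots> = TVnorm D y - TVnorm D x" by (simp add: TVnorm_def sum_subtractf)
      finally show ?thesis .
    qed
    have "0 = c \<bullet> (y - x) + fst xi * ((transpose Psi *v g1) \<bullet> (y - x))
              + snd xi * ((\<Sum>i\<in>UNIV. transpose (D i) *v g2 i) \<bullet> (y - x))"
    proof -
      have "0 = (0::real^'n) \<bullet> (y - x)" by simp
      also have "\<dots> = c \<bullet> (y - x) + fst xi * ((transpose Psi *v g1) \<bullet> (y - x))
              + snd xi * ((\<Sum>i\<in>UNIV. transpose (D i) *v g2 i) \<bullet> (y - x))"
        by (subst eq) (simp only: c_def inner_add_left inner_scaleR_left)
      finally show ?thesis .
    qed
    moreover have "fst xi * ((transpose Psi *v g1) \<bullet> (y - x)) \<le> fst xi * (l1norm (Psi *v y) - l1norm (Psi *v x))"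
      using xi h1 by (intro mult_left_mono) (auto simp: R2plus_def)
    moreover have "snd xi * ((\<Sum>i\<in>UNIV. transpose (D i) *v g2 i) \<bullet> (y - x)) \<le> snd xi * (TVnorm D y - TVnorm D x)"
      using xi h2 by (intro mult_left_mono) (auto simp: R2plus_def)
    moreover have "lossTr Phi b y \<ge> lossTr Phi b x + c \<bullet> (y - x)"
      unfolding c_def by (rule loss_grad)
    ultimately show "lossTr Phi b x + fst xi * l1norm (Psi *v x) + snd xi * TVnorm D x
         \<le> lossTr Phi b y + fst xi * l1norm (Psi *v y) + snd xi * TVnorm D y"
      by (simp add: algebra_simps)
  qed
  then show ?thesis using xi by blast
qed

theorem mainTheorem3:
  fixes Psi :: "real^'n^'d" and D :: "'n \<Rightarrow> real^'n^'k"
    and Phitr :: "real^'n^'m1" and btr :: "real^'m1"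
    and Phival :: "real^'n^'m2" and bval :: "real^'m2"
  shows "(\<forall>xb rb xib.
            globalOptP2 Psi D Phitr btr Phival bval xb rb \<and>
            (xb, xib) \<in> Mset Psi D Phitr btr rb
            \<longrightarrow> globalOptP1 Psi D Phitr btr Phival bval xb xib)
       \<and> ((\<exists>DD :: ((real^'n) \<times> (real \<times> real)) set.
              DD \<subseteq> UNIV \<times> R2plus \<and> UNIV \<times> R2plus \<subseteq> closure DD \<and>
              (\<forall>x r. (x, r) \<in> DD \<longrightarrow> Mset Psi D Phitr btr r \<noteq> {}))
          \<longrightarrow> (\<forall>xb lb. globalOptP1 Psi D Phitr btr Phival bval xb lb
                 \<longrightarrow> globalOptP2 Psi D Phitr btr Phival bval xb (Qmap Psi D xb)))"
proof (intro conjI allI impI)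
  fix xb rb xib
  assume h: "globalOptP2 Psi D Phitr btr Phival bval xb rb \<and> (xb, xib) \<in> Mset Psi D Phitr btr rb"
  then have P2: "\<forall>x' r'. r' \<in> R2plus \<and> x' \<in> Sc Psi D Phitr btr r'
        \<longrightarrow> Fval Phival bval xb \<le> Fval Phival bval x'"
    unfolding globalOptP2_def by blast
  have xi: "xib \<in> R2plus \<and> xb \<in> Sp Psi D Phitr btr xib" using h M_to_Sp by blast
  have "Fval Phival bval xb \<le> Fval Phival bval x'"
    if "lam' \<in> R2plus" "x' \<in> Sp Psi D Phitr btr lam'" for x' lam'
  proof -
    have "x' \<in> Sc Psi D Phitr btr (Qmap Psi D x')" using Sp_to_Sc that by blast
    moreover have "Qmap Psi D x' \<in> R2plus" by (simp add: Qmap_def R2plus_def l1_nonneg TV_nonneg)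
    ultimately show ?thesis using P2 by blast
  qed
  then show "globalOptP1 Psi D Phitr btr Phival bval xb xib"
    unfolding globalOptP1_def using xi by blast
next
  fix xb lb
  assume h: "globalOptP1 Psi D Phitr btr Phival bval xb lb"
  then have lb: "lb \<in> R2plus" "xb \<in> Sp Psi D Phitr btr lb"
    and P1: "\<forall>x' lam'. lam' \<in> R2plus \<and> x' \<in> Sp Psi D Phitr btr lam'
        \<longrightarrow> Fval Phival bval xb \<le> Fval Phival bval x'"
    unfolding globalOptP1_def by blast+
  have "Fval Phival bval xb \<le> Fval Phival bval x'"
    if "r' \<in> R2plus" "x' \<in> Sc Psi D Phitr btr r'" for x' r'
    using Sc_to_Sp[OF that(2)] P1 by blast
  moreover have "Qmap Psi D xb \<in> R2plus" by (simp add: Qmap_def R2plus_def l1_nonneg TV_nonneg)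
  moreover have "xb \<in> Sc Psi D Phitr btr (Qmap Psi D xb)" using Sp_to_Sc lb by blast
  ultimately show "globalOptP2 Psi D Phitr btr Phival bval xb (Qmap Psi D xb)"
    unfolding globalOptP2_def by blast
qed

end
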